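(* Let $p=4k+1$ be a prime, let $J(k)=\sum_{i=1}^{4k-2}\big(\frac{i(i+1)(i+2)}{p}\big)$, let $S\subset\mathbb{P}^5$ be the surface over $\mathbb{F}_p$ defined by $x_1^2-x_2^2=x_3^2$, $x_0^2-x_1^2=x_4^2$, $x_0^2-x_2^2=x_5^2$, let $M_p$ be the number of solutions $(x,y,z)\in\mathbb{F}_p^3$ of $z^2=(x^2y^2+1)(x^2+y^2)$, and let $N_p$ be the number of solutions $(x,y)\in\mathbb{F}_p^2$ of $y^2=x^3-x$. Then $$|S(\mathbb{F}_p)|=(p+1)^2+J(k)^2\quad\text{if and only if}\quad M_p=(p+1)^2+(N_p-p)^2+1=(p+1)^2+J(k)^2+1.$$
   Context: $\big(\frac{a}{p}\big)$ is the Legendre symbol. *)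

theory Defs
  imports "HOL-Number_Theory.Number_Theory"
begin

text \<open>Elements of F_p are represented by integer residues in {0..<p}.\<close>

definition J :: "nat \<Rightarrow> nat \<Rightarrow> int" where
  "J p k = (\<Sum>i=1..4*k-2. Legendre (int i * (int i + 1) * (int i + 2)) (int p))"

definition S_cone :: "nat \<Rightarrow> int list set" where
  "S_cone p = {x. length x = 6 \<and> (\<forall>c\<in>set x. 0 \<le> c \<and> c < int p) \<and> x \<noteq> replicate 6 0 \<and>
     [x!1^2 - x!2^2 = x!3^2] (mod int p) \<and>
     [x!0^2 - x!1^2 = x!4^2] (mod int p) \<and>
     [x!0^2 - x!2^2 = x!5^2] (mod int p)}"

definition proj_rel :: "nat \<Rightarrow> int list set \<Rightarrow> (int list \<times> int list) set" where
  "proj_rel p A = {(x,y). x \<in> A \<and> y \<in> A \<and>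
     (\<exists>c. \<not> [c = 0] (mod int p) \<and> (\<forall>i<6. [y!i = c * x!i] (mod int p)))}"

definition S_points :: "nat \<Rightarrow> int list set set" where
  "S_points p = S_cone p // proj_rel p (S_cone p)"

definition M :: "nat \<Rightarrow> nat" where
  "M p = card {(x,y,z). x \<in> {0..<int p} \<and> y \<in> {0..<int p} \<and> z \<in> {0..<int p} \<and>
     [z^2 = (x^2*y^2 + 1) * (x^2 + y^2)] (mod int p)}"

definition N :: "nat \<Rightarrow> nat" where
  "N p = card {(x,y). x \<in> {0..<int p} \<and> y \<in> {0..<int p} \<and>
     [y^2 = x^3 - x] (mod int p)}"

end

theory Submission
  imports Defs
begin

context
  fixes P :: int
  assumes Pprime: "prime P" and Podd: "odd P"
begin

lemma P_gt2: "P > 2"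
proof -
  have "P \<ge> 2" using Pprime prime_ge_2_int by blast
  moreover have "P \<noteq> 2" using Podd by auto
  ultimately show ?thesis by simp
qed

lemma dvd_mult_P: "P dvd a * b \<longleftrightarrow> P dvd a \<or> P dvd b"
  using Pprime prime_dvd_mult_iff by blast

lemma dvd_pow_P: "P dvd a ^ n \<Longrightarrow> P dvd a"
  using Pprime prime_dvd_power by blast

lemma coprime_P: "\<not> P dvd a \<Longrightarrow> coprime a P"
  using Pprime by (metis coprime_commute prime_imp_coprime)

lemma not_dvd_2: "\<not> P dvd 2"
  using P_gt2 by (auto dest: zdvd_imp_le)

lemma inv_ex: "\<not> P dvd a \<Longrightarrow> \<exists>w. P dvd (a * w - 1)"
  using cong_solve_coprime_int[OF coprime_P] by (auto simp: cong_iff_dvd_diff)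

lemma cancel_P: "P dvd (a * u - b * u) \<Longrightarrow> \<not> P dvd u \<Longrightarrow> P dvd (a - b)"
  by (metis dvd_mult_P left_diff_distrib)

lemma range_eq: "0 \<le> a \<Longrightarrow> a < P \<Longrightarrow> 0 \<le> b \<Longrightarrow> b < P \<Longrightarrow> P dvd (a - b) \<Longrightarrow> a = b"
  using cong_less_imp_eq_int[of a P b] by (simp add: cong_iff_dvd_diff)

lemma range_0: "0 \<le> a \<Longrightarrow> a < P \<Longrightarrow> P dvd a \<Longrightarrow> a = 0"
  using range_eq[of a 0] by simp

lemma sq_count:
  "card {y \<in> {0..<P}. [y^2 = a] (mod P)} =
     (if [a = 0] (mod P) then 1 else if QuadRes P a then 2 else 0)"
proof (cases "[a = 0] (mod P)")
  case True
  have "{y \<in> {0..<P}. [y^2 = a] (mod P)} = {0}"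
  proof -
    { fix y assume y: "y \<in> {0..<P}" "[y^2 = a] (mod P)"
      have "[y^2 = 0] (mod P)" using y(2) True by (rule cong_trans)
      then have "P dvd y^2" by (simp add: cong_0_iff)
      then have "P dvd y" by (rule dvd_pow_P)
      then have "y = 0" using range_0 y(1) by auto }
    moreover have "[0^2 = a] (mod P)" using True by (simp add: cong_sym)
    ultimately show ?thesis using P_gt2 by auto
  qed
  then show ?thesis using True by simp
next
  case False
  note F = False
  show ?thesis
  proof (cases "QuadRes P a")
    case True
    then obtain y0 where y0: "[y0^2 = a] (mod P)" unfolding QuadRes_def by blast
    define y1 where "y1 = y0 mod P"
    have y1r: "0 \<le> y1" "y1 < P" using P_gt2 by (auto simp: y1_def)
    have "[y1 = y0] (mod P)" unfolding y1_def by simp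
    then have "[y1^2 = y0^2] (mod P)" by (rule cong_pow)
    then have y1sq: "[y1^2 = a] (mod P)" using y0 by (rule cong_trans)
    have y1nz: "y1 \<noteq> 0"
    proof
      assume "y1 = 0"
      then have "[0 = a] (mod P)" using y1sq by simp
      then show False using F by (simp add: cong_sym_eq)
    qed
    have "{y \<in> {0..<P}. [y^2 = a] (mod P)} = {y1, P - y1}"
    proof -
      { fix y assume y: "y \<in> {0..<P}" "[y^2 = a] (mod P)"
        have "[y^2 = y1^2] (mod P)" using y(2) y1sq cong_sym cong_trans by blast
        then have d: "P dvd (y^2 - y1^2)" by (simp add: cong_iff_dvd_diff)
        have "y^2 - y1^2 = (y - y1) * (y - (P - y1)) + P * (y - y1)"
          by (simp add: algebra_simps power2_eq_square)
        with d have "P dvd (y - y1) * (y - (P - y1))"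
          by (metis dvd_add_left_iff dvd_triv_left)
        then have "P dvd (y - y1) \<or> P dvd (y - (P - y1))" using dvd_mult_P by blast
        moreover have "0 \<le> P - y1" "P - y1 < P" using y1r y1nz by auto
        ultimately have "y = y1 \<or> y = P - y1" using range_eq y(1) y1r by auto }
      moreover have "[(P - y1)^2 = a] (mod P)"
      proof -
        have "(P - y1)^2 = y1^2 + P * (P - 2*y1)" by (simp add: algebra_simps power2_eq_square)
        then have "[(P - y1)^2 = y1^2] (mod P)" by (simp add: cong_iff_dvd_diff)
        then show ?thesis using y1sq by (rule cong_trans)
      qed
      ultimately show ?thesis using y1r y1nz y1sq by auto
    qed
    moreover have "y1 \<noteq> P - y1"
    proof
      assume "y1 = P - y1"
      then have "P = 2 * y1" by simp
      then show False using Podd by simp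
    qed
    ultimately show ?thesis using F True by simp
  next
    case False
    then have "{y \<in> {0..<P}. [y^2 = a] (mod P)} = {}" unfolding QuadRes_def by blast
    then show ?thesis using F False by (simp only: card.empty if_False if_True)
  qed
qed

lemma sq_count_int:
  "int (card {y \<in> {0..<P}. [y^2 = a] (mod P)}) = 1 + Legendre a P"
  unfolding sq_count Legendre_def by simp

lemma card_pairs:
  assumes "finite A" "finite B"
  shows "card {(u,v). u \<in> A \<and> v \<in> B \<and> Q u v} = (\<Sum>u\<in>A. card {v \<in> B. Q u v})"
proof -
  have "{(u,v). u \<in> A \<and> v \<in> B \<and> Q u v} = Sigma A (\<lambda>u. {v \<in> B. Q u v})" by auto
  then show ?thesis using assms by simp
qed

lemma fin_R: "finite {0..<P}" by simp

lemma card_R: "card {0..<P} = nat P" by simp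

lemma card_R0: "card ({0..<P} - {0}) = nat (P - 1)"
  using P_gt2 by (simp add: card_Diff_singleton)

lemma prod_fiber:
  assumes u: "u \<in> {0..<P}"
  shows "card {v \<in> {0..<P}. [u * v = c] (mod P)} =
     (if [c = 0] (mod P) then (if u = 0 then nat P else 1) else (if u = 0 then 0 else 1))"
proof (cases "u = 0")
  case True
  then have "{v \<in> {0..<P}. [u * v = c] (mod P)} = (if [c = 0] (mod P) then {0..<P} else {})"
  proof -
    have e: "[u * v = c] (mod P) \<longleftrightarrow> [c = 0] (mod P)" for v using True by (simp add: cong_sym_eq)
    show ?thesis by (simp only: e) auto
  qed
  then show ?thesis using True by simp
next
  case False
  have nd: "\<not> P dvd u"
  proof
    assume "P dvd u"
    then have "u = 0" using u by (intro range_0) auto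
    then show False using False by simp
  qed
  then obtain w where w: "P dvd (u * w - 1)" using inv_ex by blast
  define v0 where "v0 = (c * w) mod P"
  have v0r: "v0 \<in> {0..<P}" using P_gt2 by (simp add: v0_def)
  have "[u * v0 = u * (c * w)] (mod P)" unfolding v0_def by (simp add: cong_mult)
  moreover have "u * (c * w) - c = c * (u * w - 1)" by (simp add: algebra_simps)
  then have "[u * (c * w) = c] (mod P)" using w by (simp add: cong_iff_dvd_diff)
  ultimately have v0s: "[u * v0 = c] (mod P)" by (rule cong_trans)
  have "{v \<in> {0..<P}. [u * v = c] (mod P)} = {v0}"
  proof -
    { fix v assume v: "v \<in> {0..<P}" "[u * v = c] (mod P)"
      have "[u * v = u * v0] (mod P)" using v(2) cong_sym[OF v0s] by (rule cong_trans)
      then have "[v * u = v0 * u] (mod P)" by (simp only: mult.commute)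
      then have "P dvd (v * u - v0 * u)" by (simp add: cong_iff_dvd_diff)
      then have "P dvd (v - v0)" using nd cancel_P by blast
      then have "v = v0" using range_eq v v0r by auto }
    note X = this
    show ?thesis
      using X v0r v0s by blast
  qed
  then show ?thesis using False by simp
qed

lemma prod_count:
  "int (card {(u,v). u \<in> {0..<P} \<and> v \<in> {0..<P} \<and> [u * v = c] (mod P)}) =
     (if [c = 0] (mod P) then 2 * P - 1 else P - 1)"
proof -
  have "card {(u,v). u \<in> {0..<P} \<and> v \<in> {0..<P} \<and> [u * v = c] (mod P)} =
    (\<Sum>u\<in>{0..<P}. card {v \<in> {0..<P}. [u * v = c] (mod P)})"
    by (rule card_pairs) auto
  also have "\<dots> = (\<Sum>u\<in>{0..<P}. (if [c = 0] (mod P) then (if u = 0 then nat P else 1) else (if u = 0 then 0 else 1)))"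
    by (rule sum.cong[OF refl], rule prod_fiber, assumption)
  also have "\<dots> = (if [c = 0] (mod P) then nat P + card ({0..<P} - {0}) else card ({0..<P} - {0}))"
  proof -
    have z: "0 \<in> {0..<P}" using P_gt2 by simp
    have "(\<Sum>u\<in>{0..<P}. f u) = f 0 + (\<Sum>u\<in>{0..<P} - {0}. f u)" for f :: "int \<Rightarrow> nat"
      using z by (simp add: sum.remove)
    then show ?thesis by simp
  qed
  finally show ?thesis using P_gt2 card_R0 by simp
qed

lemma hyp_count:
  "int (card {(a,b). a \<in> {0..<P} \<and> b \<in> {0..<P} \<and> [a^2 - b^2 = c] (mod P)}) =
     (if [c = 0] (mod P) then 2 * P - 1 else P - 1)"
proof -
  define A where "A = {(a,b). a \<in> {0..<P} \<and> b \<in> {0..<P} \<and> [a^2 - b^2 = c] (mod P)}"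
  define H where "H = {(u,v). u \<in> {0..<P} \<and> v \<in> {0..<P} \<and> [u * v = c] (mod P)}"
  define f where "f = (\<lambda>(a::int,b::int). ((a - b) mod P, (a + b) mod P))"
  obtain h where h: "P dvd (2 * h - 1)" using inv_ex not_dvd_2 by blast
  have inj: "inj_on f A"
  proof (rule inj_onI)
    fix x y assume x: "x \<in> A" and y: "y \<in> A" and e: "f x = f y"
    obtain a b where ab: "x = (a,b)" by force
    obtain a' b' where ab': "y = (a',b')" by force
    have r: "a \<in> {0..<P}" "b \<in> {0..<P}" "a' \<in> {0..<P}" "b' \<in> {0..<P}"
      using x y ab ab' A_def by auto
    have e1: "P dvd ((a - b) - (a' - b'))" "P dvd ((a + b) - (a' + b'))"
      using e ab ab' unfolding f_def by (auto simp: mod_eq_dvd_iff)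
    have eq1: "a * 2 - a' * 2 = ((a - b) - (a' - b')) + ((a + b) - (a' + b'))" by simp
    have "P dvd (a * 2 - a' * 2)" unfolding eq1 using e1 by (rule dvd_add)
    then have "P dvd (a - a')" using cancel_P not_dvd_2 by blast
    moreover have eq2: "b * 2 - b' * 2 = ((a + b) - (a' + b')) - ((a - b) - (a' - b'))" by simp
    have "P dvd (b * 2 - b' * 2)" unfolding eq2 using e1(2) e1(1) by (rule dvd_diff)
    then have "P dvd (b - b')" using cancel_P not_dvd_2 by blast
    ultimately show "x = y" using range_eq r ab ab' by auto
  qed
  have img: "f ` A = H"
  proof
    show "f ` A \<subseteq> H"
    proof
      fix z assume "z \<in> f ` A"
      then obtain a b where ab: "(a,b) \<in> A" "z = f (a,b)" by force
      have "[(a - b) mod P * ((a + b) mod P) = (a - b) * (a + b)] (mod P)"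
        by (simp add: cong_mult)
      moreover have "(a - b) * (a + b) = a^2 - b^2" by (simp add: algebra_simps power2_eq_square)
      moreover have "[a^2 - b^2 = c] (mod P)" using ab(1) by (simp add: A_def)
      ultimately have "[(a - b) mod P * ((a + b) mod P) = c] (mod P)"
        by (metis cong_trans)
      then show "z \<in> H" using ab P_gt2 unfolding H_def f_def by auto
    qed
  next
    show "H \<subseteq> f ` A"
    proof
      fix z assume z: "z \<in> H"
      then obtain u v where uv: "z = (u,v)" "u \<in> {0..<P}" "v \<in> {0..<P}" "[u * v = c] (mod P)"
        unfolding H_def by auto
      define a where "a = ((u + v) * h) mod P"
      define b where "b = ((v - u) * h) mod P"
      have "P dvd ((a - b) - u)"
      proof -
        have "P dvd (a - (u + v) * h)" "P dvd (b - (v - u) * h)"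
          unfolding a_def b_def by (simp_all add: mod_eq_dvd_iff[symmetric] mod_diff_eq)
        moreover have "(a - b) - u = (a - (u + v) * h) - (b - (v - u) * h) + u * (2 * h - 1)"
          by (simp add: algebra_simps)
        ultimately show ?thesis using h by (metis dvd_add dvd_diff dvd_mult)
      qed
      then have "(a - b) mod P = u mod P" by (simp add: mod_eq_dvd_iff)
      then have 1: "(a - b) mod P = u" using uv(2) by simp
      have "P dvd ((a + b) - v)"
      proof -
        have "P dvd (a - (u + v) * h)" "P dvd (b - (v - u) * h)"
          unfolding a_def b_def by (simp_all add: mod_eq_dvd_iff[symmetric] mod_diff_eq)
        moreover have "(a + b) - v = (a - (u + v) * h) + (b - (v - u) * h) + v * (2 * h - 1)"
          by (simp add: algebra_simps)
        ultimately show ?thesis using h by (metis dvd_add dvd_mult)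
      qed
      then have "(a + b) mod P = v mod P" by (simp add: mod_eq_dvd_iff)
      then have 2: "(a + b) mod P = v" using uv(3) by simp
      have "[a^2 - b^2 = (a - b) mod P * ((a + b) mod P)] (mod P)"
      proof -
        have "[(a - b) mod P * ((a + b) mod P) = (a - b) * (a + b)] (mod P)"
          by (simp add: cong_mult)
        moreover have "(a - b) * (a + b) = a^2 - b^2" by (simp add: algebra_simps power2_eq_square)
        ultimately show ?thesis by (simp add: cong_sym)
      qed
      then have "[a^2 - b^2 = c] (mod P)" using 1 2 uv(4) by (metis cong_trans)
      moreover have "a \<in> {0..<P}" "b \<in> {0..<P}" using P_gt2 by (auto simp: a_def b_def)
      ultimately have "(a,b) \<in> A" unfolding A_def by auto
      moreover have "f (a,b) = z" using 1 2 uv(1) unfolding f_def by simp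
      ultimately show "z \<in> f ` A" by force
    qed
  qed
  have "card A = card H" using card_image[OF inj] img by simp
  then show ?thesis using prod_count[of c] unfolding A_def H_def by simp
qed

lemma N_count:
  "int (card {(x,y). x \<in> {0..<P} \<and> y \<in> {0..<P} \<and> [y^2 = x^3 - x] (mod P)}) =
     P + (\<Sum>x\<in>{0..<P}. Legendre (x^3 - x) P)"
proof -
  have "card {(x,y). x \<in> {0..<P} \<and> y \<in> {0..<P} \<and> [y^2 = x^3 - x] (mod P)} =
     (\<Sum>x\<in>{0..<P}. card {y \<in> {0..<P}. [y^2 = x^3 - x] (mod P)})"
    by (rule card_pairs) auto
  then have "int (card {(x,y). x \<in> {0..<P} \<and> y \<in> {0..<P} \<and> [y^2 = x^3 - x] (mod P)}) =
     (\<Sum>x\<in>{0..<P}. int (card {y \<in> {0..<P}. [y^2 = x^3 - x] (mod P)}))"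
    by simp
  also have "\<dots> = (\<Sum>x\<in>{0..<P}. 1 + Legendre (x^3 - x) P)"
    by (rule sum.cong[OF refl], rule sq_count_int)
  also have "\<dots> = P + (\<Sum>x\<in>{0..<P}. Legendre (x^3 - x) P)"
    using P_gt2 by (simp add: sum.distrib)
  finally show ?thesis .
qed


lemma L_sum:
  "(\<Sum>x\<in>{0..<P}. Legendre (x^3 - x) P) = (\<Sum>i\<in>{1..P-3}. Legendre (i * (i + 1) * (i + 2)) P)"
proof -
  define f where "f = (\<lambda>x::int. Legendre (x^3 - x) P)"
  have f0: "f 0 = 0" "f 1 = 0" unfolding f_def Legendre_def by simp_all
  have "(P - 1)^3 - (P - 1) = P * ((P - 1) * (P - 2))" by (simp add: algebra_simps power3_eq_cube)
  then have "[(P - 1)^3 - (P - 1) = 0] (mod P)" by (simp add: cong_0_iff)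
  then have f2: "f (P - 1) = 0" unfolding f_def Legendre_def by simp
  have dec: "{0..<P} = insert 0 (insert 1 (insert (P - 1) {2..P-2}))" using P_gt2 by auto
  have "(\<Sum>x\<in>{0..<P}. f x) = f 0 + f 1 + f (P - 1) + (\<Sum>x\<in>{2..P-2}. f x)"
    unfolding dec using P_gt2 by (simp add: algebra_simps)
  also have "\<dots> = (\<Sum>x\<in>{2..P-2}. f x)" using f0 f2 by simp
  also have "\<dots> = (\<Sum>i\<in>{1..P-3}. f (i + 1))"
  proof -
    have "{2..P-2} = (\<lambda>i. i + 1) ` {1..P-3}"
    proof -
      have "x \<in> (\<lambda>i. i + 1) ` {1..P-3}" if "x \<in> {2..P-2}" for x
        using that by (intro image_eqI[of _ _ "x - 1"]) auto
      then show ?thesis by auto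
    qed
    moreover have "sum f ((\<lambda>i. i + 1) ` {1..P-3}) = sum (f \<circ> (\<lambda>i. i + 1)) {1..P-3}"
      by (rule sum.reindex) (simp add: inj_on_def)
    ultimately show ?thesis by simp
  qed
  also have "\<dots> = (\<Sum>i\<in>{1..P-3}. Legendre (i * (i + 1) * (i + 2)) P)"
  proof (rule sum.cong[OF refl])
    fix i :: int
    have "(i + 1)^3 - (i + 1) = i * (i + 1) * (i + 2)" by (simp add: algebra_simps power3_eq_cube)
    then show "f (i + 1) = Legendre (i * (i + 1) * (i + 2)) P" unfolding f_def by simp
  qed
  finally show ?thesis unfolding f_def .
qed


lemma cong_lin1: "[X = Y] (mod P) \<Longrightarrow> A - B = q * (X - Y) \<Longrightarrow> [A = B] (mod P)"
  by (simp add: cong_iff_dvd_diff)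

lemma cong_lin2: "[X1 = Y1] (mod P) \<Longrightarrow> [X2 = Y2] (mod P) \<Longrightarrow>
    A - B = q1 * (X1 - Y1) + q2 * (X2 - Y2) \<Longrightarrow> [A = B] (mod P)"
  by (simp add: cong_iff_dvd_diff)

lemma cong_lin3: "[X1 = Y1] (mod P) \<Longrightarrow> [X2 = Y2] (mod P) \<Longrightarrow> [X3 = Y3] (mod P) \<Longrightarrow>
    A - B = q1 * (X1 - Y1) + q2 * (X2 - Y2) + q3 * (X3 - Y3) \<Longrightarrow> [A = B] (mod P)"
  by (simp add: cong_iff_dvd_diff)

lemma cong_lin4: "[X1 = Y1] (mod P) \<Longrightarrow> [X2 = Y2] (mod P) \<Longrightarrow> [X3 = Y3] (mod P) \<Longrightarrow> [X4 = Y4] (mod P) \<Longrightarrow>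
    A - B = q1 * (X1 - Y1) + q2 * (X2 - Y2) + q3 * (X3 - Y3) + q4 * (X4 - Y4) \<Longrightarrow> [A = B] (mod P)"
  by (simp add: cong_iff_dvd_diff)

lemma cong_cancel: "[a * u = b * u] (mod P) \<Longrightarrow> \<not> P dvd u \<Longrightarrow> [a = b] (mod P)"
  using cong_mult_rcancel[OF coprime_P] by blast

lemma cong_0_range: "x \<in> {0..<P} \<Longrightarrow> [x = 0] (mod P) \<longleftrightarrow> x = 0"
  using range_0[of x] by (auto simp: cong_0_iff)

lemma nz_range: "x \<in> {0..<P} \<Longrightarrow> x \<noteq> 0 \<Longrightarrow> \<not> P dvd x"
  using range_0[of x] by auto

lemma nd_mult: "\<not> P dvd a \<Longrightarrow> \<not> P dvd b \<Longrightarrow> \<not> P dvd (a * b)"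
  using dvd_mult_P by blast

lemma mod_eq_range: "y \<in> {0..<P} \<Longrightarrow> [x = y] (mod P) \<Longrightarrow> x mod P = y"
  by (simp add: cong_def)

end

lemma J_eq:
  assumes "prime p" "p = 4 * k + 1"
  shows "J p k = int (N p) - int p"
proof -
  have od: "odd (int p)" using assms(2) by simp
  have pr: "prime (int p)" using assms(1) by simp
  have k1: "k \<ge> 1" using assms prime_ge_2_nat[of p] by auto
  have "J p k = (\<Sum>i\<in>int ` {1..4*k-2}. Legendre (i * (i + 1) * (i + 2)) (int p))"
    unfolding J_def by (simp add: sum.reindex)
  also have "int ` {1..4*k-2} = {1..int p - 3}"
  proof -
    have "int ` {1..4*k-2} = {int 1..int (4*k-2)}" by (simp only: image_int_atLeastAtMost)
    also have "int (4*k-2) = int p - 3" using k1 assms(2) by simp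
    finally show ?thesis by simp
  qed
  finally have "J p k = (\<Sum>i\<in>{1..int p - 3}. Legendre (i * (i + 1) * (i + 2)) (int p))" .
  also have "\<dots> = (\<Sum>x\<in>{0..<int p}. Legendre (x^3 - x) (int p))"
    using L_sum[OF pr od] by simp
  also have "\<dots> = int (N p) - int p"
    using N_count[OF pr od] unfolding N_def by simp
  finally show ?thesis .
qed


definition E6 :: "int \<Rightarrow> int list \<Rightarrow> bool" where
  "E6 P v \<longleftrightarrow> [v!1^2 - v!2^2 = v!3^2] (mod P) \<and> [v!0^2 - v!1^2 = v!4^2] (mod P) \<and>
     [v!0^2 - v!2^2 = v!5^2] (mod P)"

definition wv :: "int \<Rightarrow> int \<Rightarrow> int \<Rightarrow> int list" where
  "wv x y z = [z, y * (x^2 + 1), y * (x^2 - 1), 2 * x * y, x * (y^2 - 1), x * (y^2 + 1)]"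

definition FF :: "int \<Rightarrow> int \<Rightarrow> int" where
  "FF x y = (x^2 * y^2 + 1) * (x^2 + y^2)"

lemma wv_nth: "wv x y z ! 0 = z" "wv x y z ! 1 = y * (x^2 + 1)" "wv x y z ! 2 = y * (x^2 - 1)"
  "wv x y z ! 3 = 2 * x * y" "wv x y z ! 4 = x * (y^2 - 1)" "wv x y z ! 5 = x * (y^2 + 1)"
  "length (wv x y z) = 6"
  by (simp_all add: wv_def)

definition scl :: "int \<Rightarrow> int \<Rightarrow> int list \<Rightarrow> int list" where
  "scl P c v = map (\<lambda>t. (c * t) mod P) v"

context
  fixes p :: nat and P :: int
  assumes pp: "prime p" and po: "odd p" and PP: "P = int p"
begin

lemma Pp: "prime P" using pp PP by simp
lemma Po: "odd P" using po PP by simp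
lemmas gt2 = P_gt2[OF Pp Po]
lemmas rng_eq = range_eq[OF Pp Po]
lemmas cg_lin1 = cong_lin1[OF Pp Po]
lemmas cg_lin2 = cong_lin2[OF Pp Po]
lemmas cg_lin3 = cong_lin3[OF Pp Po]
lemmas cg_lin4 = cong_lin4[OF Pp Po]
lemmas cg_cancel = cong_cancel[OF Pp Po]
lemmas cg0 = cong_0_range[OF Pp Po]
lemmas nzr = nz_range[OF Pp Po]
lemmas ndm = nd_mult[OF Pp Po]
lemmas mer = mod_eq_range[OF Pp Po]
lemmas nd2 = not_dvd_2[OF Pp Po]
lemmas invex = inv_ex[OF Pp Po]

lemma cone_char:
  "v \<in> S_cone p \<longleftrightarrow> length v = 6 \<and> (\<forall>i<6. v!i \<in> {0..<P}) \<and> (\<exists>i<6. v!i \<noteq> 0) \<and> E6 P v"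
proof -
  have a: "(\<forall>c\<in>set v. 0 \<le> c \<and> c < P) \<longleftrightarrow> (\<forall>i<length v. v!i \<in> {0..<P})"
    by (metis atLeastLessThan_iff in_set_conv_nth)
  have b: "length v = 6 \<Longrightarrow> v \<noteq> replicate 6 0 \<longleftrightarrow> (\<exists>i<6. v!i \<noteq> 0)"
    by (auto simp: list_eq_iff_nth_eq)
  show ?thesis unfolding S_cone_def E6_def PP[symmetric] using a b by auto
qed

lemma E6_scale:
  assumes "\<forall>i<6. [w!i = c * v!i] (mod P)" and "E6 P v"
  shows "E6 P w"
proof -
  have h: "[w!i = c * v!i] (mod P)" if "i < 6" for i using assms(1) that by blast
  have sq: "[(w!i)^2 = c^2 * (v!i)^2] (mod P)" if "i < 6" for i
  proof -
    have "[(w!i)^2 = (c * v!i)^2] (mod P)" using h[OF that] by (rule cong_pow)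
    then show ?thesis by (simp add: power_mult_distrib)
  qed
  have e: "[v!1^2 - v!2^2 = v!3^2] (mod P)" "[v!0^2 - v!1^2 = v!4^2] (mod P)" "[v!0^2 - v!2^2 = v!5^2] (mod P)"
    using assms(2) unfolding E6_def by auto
  have "[w!1^2 - w!2^2 = c^2 * (v!1^2 - v!2^2)] (mod P)"
    using cong_diff[OF sq[of 1] sq[of 2]] by (simp add: algebra_simps)
  moreover have "[c^2 * (v!1^2 - v!2^2) = c^2 * v!3^2] (mod P)" using e(1) by (rule cong_scalar_left)
  moreover have "[c^2 * v!3^2 = w!3^2] (mod P)" using sq[of 3] by (simp add: cong_sym)
  ultimately have 1: "[w!1^2 - w!2^2 = w!3^2] (mod P)" by (meson cong_trans)
  have "[w!0^2 - w!1^2 = c^2 * (v!0^2 - v!1^2)] (mod P)"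
    using cong_diff[OF sq[of 0] sq[of 1]] by (simp add: algebra_simps)
  moreover have "[c^2 * (v!0^2 - v!1^2) = c^2 * v!4^2] (mod P)" using e(2) by (rule cong_scalar_left)
  moreover have "[c^2 * v!4^2 = w!4^2] (mod P)" using sq[of 4] by (simp add: cong_sym)
  ultimately have 2: "[w!0^2 - w!1^2 = w!4^2] (mod P)" by (meson cong_trans)
  have "[w!0^2 - w!2^2 = c^2 * (v!0^2 - v!2^2)] (mod P)"
    using cong_diff[OF sq[of 0] sq[of 2]] by (simp add: algebra_simps)
  moreover have "[c^2 * (v!0^2 - v!2^2) = c^2 * v!5^2] (mod P)" using e(3) by (rule cong_scalar_left)
  moreover have "[c^2 * v!5^2 = w!5^2] (mod P)" using sq[of 5] by (simp add: cong_sym)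
  ultimately have 3: "[w!0^2 - w!2^2 = w!5^2] (mod P)" by (meson cong_trans)
  show ?thesis unfolding E6_def using 1 2 3 by blast
qed


lemma scl_len [simp]: "length (scl P c v) = length v" by (simp add: scl_def)
lemma scl_nth [simp]: "i < length v \<Longrightarrow> scl P c v ! i = (c * v!i) mod P" by (simp add: scl_def)

lemma finite_cone: "finite (S_cone p)"
proof -
  have "S_cone p \<subseteq> {v. set v \<subseteq> {0..<P} \<and> length v = 6}"
    unfolding S_cone_def PP[symmetric] by (simp add: subset_iff)
  moreover have "finite {v. set v \<subseteq> {0..<P} \<and> length v = 6}"
    by (rule finite_lists_length_eq) simp
  ultimately show ?thesis by (rule finite_subset)
qed

lemma scl_cone:
  assumes v: "v \<in> S_cone p" and c: "\<not> P dvd c"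
  shows "scl P c v \<in> S_cone p"
proof -
  have l: "length v = 6" and r: "\<forall>i<6. v!i \<in> {0..<P}" and nz: "\<exists>i<6. v!i \<noteq> 0" and e: "E6 P v"
    using v cone_char by auto
  have "length (scl P c v) = 6" using l by simp
  moreover have "\<forall>i<6. scl P c v ! i \<in> {0..<P}" using l gt2 by simp
  moreover have "\<exists>i<6. scl P c v ! i \<noteq> 0"
  proof -
    obtain j where j: "j < 6" "v!j \<noteq> 0" using nz by blast
    have "\<not> P dvd v!j" using nzr r j by blast
    then have "\<not> P dvd (c * v!j)" using ndm c by blast
    then have "(c * v!j) mod P \<noteq> 0" by (simp add: dvd_eq_mod_eq_0)
    then show ?thesis using j l by auto
  qed
  moreover have "E6 P (scl P c v)"
    by (rule E6_scale[OF _ e, of _ c]) (simp add: l)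
  ultimately show ?thesis using cone_char by blast
qed

lemma rel_def': "(v, w) \<in> proj_rel p (S_cone p) \<longleftrightarrow> v \<in> S_cone p \<and> w \<in> S_cone p \<and>
   (\<exists>c. \<not> P dvd c \<and> (\<forall>i<6. [w!i = c * v!i] (mod P)))"
  unfolding proj_rel_def PP[symmetric] by (simp add: cong_0_iff)

lemma equiv_rel: "equiv (S_cone p) (proj_rel p (S_cone p))"
proof (rule equivI)
  show "proj_rel p (S_cone p) \<subseteq> S_cone p \<times> S_cone p" unfolding proj_rel_def by (simp add: subset_iff)
  show "refl_on (S_cone p) (proj_rel p (S_cone p))"
  proof (rule refl_onI)
    fix v assume "v \<in> S_cone p"
    moreover have "\<not> P dvd 1" using gt2 zdvd_imp_le[of P 1] by linarith
    moreover have "\<forall>i<6. [v!i = 1 * v!i] (mod P)" by simp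
    ultimately show "(v, v) \<in> proj_rel p (S_cone p)" unfolding rel_def' by blast
  qed
  show "sym (proj_rel p (S_cone p))"
  proof (rule symI)
    fix v w assume "(v, w) \<in> proj_rel p (S_cone p)"
    then obtain c where vw: "v \<in> S_cone p" "w \<in> S_cone p" "\<not> P dvd c" "\<forall>i<6. [w!i = c * v!i] (mod P)"
      unfolding rel_def' by blast
    obtain d where d: "P dvd (c * d - 1)" using invex vw(3) by blast
    have dn: "\<not> P dvd d"
    proof
      assume "P dvd d" then have "P dvd c * d" by simp
      from dvd_diff[OF this d] have "P dvd 1" by simp
      then show False using gt2 zdvd_imp_le[of P 1] by linarith
    qed
    have "\<forall>i<6. [v!i = d * w!i] (mod P)"
    proof (intro allI impI)
      fix i :: nat assume i: "i < 6"
      have "[c * d = 1] (mod P)" using d by (simp add: cong_iff_dvd_diff)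
      then show "[v!i = d * w!i] (mod P)"
        using cg_lin2[OF \<open>[c * d = 1] (mod P)\<close> vw(4)[rule_format, OF i], of "v!i" "d * w!i" "- v!i" "-d"]
        by (simp add: algebra_simps)
    qed
    then show "(w, v) \<in> proj_rel p (S_cone p)" unfolding rel_def' using vw dn by blast
  qed
  show "trans (proj_rel p (S_cone p))"
  proof (rule transI)
    fix u v w assume "(u, v) \<in> proj_rel p (S_cone p)" "(v, w) \<in> proj_rel p (S_cone p)"
    then obtain c d where h: "u \<in> S_cone p" "v \<in> S_cone p" "w \<in> S_cone p" "\<not> P dvd c" "\<not> P dvd d"
      "\<forall>i<6. [v!i = c * u!i] (mod P)" "\<forall>i<6. [w!i = d * v!i] (mod P)"
      unfolding rel_def' by blast
    have "\<forall>i<6. [w!i = (d * c) * u!i] (mod P)"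
    proof (intro allI impI)
      fix i :: nat assume i: "i < 6"
      show "[w!i = (d * c) * u!i] (mod P)"
        using cg_lin2[OF h(7)[rule_format, OF i] h(6)[rule_format, OF i], of "w!i" "(d * c) * u!i" 1 d]
        by (simp add: algebra_simps)
    qed
    moreover have "\<not> P dvd (d * c)" using ndm h(4,5) by blast
    ultimately show "(u, w) \<in> proj_rel p (S_cone p)" unfolding rel_def' using h by blast
  qed
qed

lemma class_eq:
  assumes v: "v \<in> S_cone p"
  shows "proj_rel p (S_cone p) `` {v} = (\<lambda>c. scl P c v) ` {1..<P}"
proof -
  have l: "length v = 6" using v cone_char by blast
  show ?thesis
  proof
    show "proj_rel p (S_cone p) `` {v} \<subseteq> (\<lambda>c. scl P c v) ` {1..<P}"
    proof
      fix w assume "w \<in> proj_rel p (S_cone p) `` {v}"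
      then have "(v, w) \<in> proj_rel p (S_cone p)" by simp
      then obtain c0 where h: "w \<in> S_cone p" "\<not> P dvd c0" "\<forall>i<6. [w!i = c0 * v!i] (mod P)"
        unfolding rel_def' by blast
      define c where "c = c0 mod P"
      have cU: "c \<in> {1..<P}"
      proof -
        have "c \<noteq> 0" using h(2) by (simp add: c_def dvd_eq_mod_eq_0)
        moreover have "0 \<le> c" "c < P" using gt2 by (auto simp: c_def)
        ultimately show ?thesis by auto
      qed
      have lw: "length w = 6" and rw: "\<forall>i<6. w!i \<in> {0..<P}" using h(1) cone_char by auto
      have "w = scl P c v"
      proof (rule nth_equalityI)
        show "length w = length (scl P c v)" using l lw by simp
        fix i assume "i < length w"
        then have i: "i < 6" using lw by simp
        have "[c * v!i = c0 * v!i] (mod P)" unfolding c_def by (simp add: cong_mult)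
        then have "[c * v!i = w!i] (mod P)" using h(3) i by (meson cong_sym cong_trans)
        then have "(c * v!i) mod P = w!i" using mer rw i by blast
        then show "w!i = scl P c v ! i" using i l by simp
      qed
      then show "w \<in> (\<lambda>c. scl P c v) ` {1..<P}" using cU by blast
    qed
  next
    show "(\<lambda>c. scl P c v) ` {1..<P} \<subseteq> proj_rel p (S_cone p) `` {v}"
    proof
      fix w assume "w \<in> (\<lambda>c. scl P c v) ` {1..<P}"
      then obtain c where c: "c \<in> {1..<P}" "w = scl P c v" by blast
      have cn: "\<not> P dvd c" using nzr c(1) by auto
      have "w \<in> S_cone p" using scl_cone[OF v cn] c by simp
      moreover have "\<forall>i<6. [w!i = c * v!i] (mod P)" using c l by (simp add: cong_def)
      ultimately have "(v, w) \<in> proj_rel p (S_cone p)" unfolding rel_def' using v cn by blast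
      then show "w \<in> proj_rel p (S_cone p) `` {v}" by simp
    qed
  qed
qed

lemma class_card:
  assumes v: "v \<in> S_cone p"
  shows "card (proj_rel p (S_cone p) `` {v}) = p - 1"
proof -
  have l: "length v = 6" and r: "\<forall>i<6. v!i \<in> {0..<P}" and nz: "\<exists>i<6. v!i \<noteq> 0"
    using v cone_char by auto
  obtain j where j: "j < 6" "v!j \<noteq> 0" using nz by blast
  have nj: "\<not> P dvd v!j" using nzr r j by blast
  have "inj_on (\<lambda>c. scl P c v) {1..<P}"
  proof (rule inj_onI)
    fix c d assume c: "c \<in> {1..<P}" and d: "d \<in> {1..<P}" and e: "scl P c v = scl P d v"
    then have "scl P c v ! j = scl P d v ! j" by simp
    then have "(c * v!j) mod P = (d * v!j) mod P" using j l by simp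
    then have "P dvd (c * v!j - d * v!j)" by (simp add: mod_eq_dvd_iff)
    then have "P dvd (c - d)" using cancel_P[OF Pp Po] nj by blast
    then show "c = d" using rng_eq c d by auto
  qed
  then have "card (proj_rel p (S_cone p) `` {v}) = card {1..<P}"
    unfolding class_eq[OF v] by (rule card_image)
  then show ?thesis using PP by simp
qed

lemma partB: "(p - 1) * card (S_points p) = card (S_cone p)"
proof -
  have eq: "equiv (S_cone p) (proj_rel p (S_cone p))" by (rule equiv_rel)
  have U: "\<Union> (S_points p) = S_cone p" unfolding S_points_def using eq by (rule Union_quotient)
  show ?thesis
  proof -
    have "(p - 1) * card (S_points p) = card (\<Union> (S_points p))"
    proof (rule card_partition)
      show "finite (S_points p)" unfolding S_points_def
        by (rule finite_quotient[OF finite_cone]) (auto simp: proj_rel_def)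
      show "finite (\<Union> (S_points p))" using U finite_cone by simp
      show "\<And>c. c \<in> S_points p \<Longrightarrow> card c = p - 1"
        unfolding S_points_def by (erule quotientE) (simp add: class_card)
      show "\<And>c1 c2. c1 \<in> S_points p \<Longrightarrow> c2 \<in> S_points p \<Longrightarrow> c1 \<noteq> c2 \<Longrightarrow> c1 \<inter> c2 = {}"
        unfolding S_points_def using quotient_disj[OF eq] by blast
    qed
    then show ?thesis using U by simp
  qed
qed

lemma nzU: "c \<in> {1..<P} \<Longrightarrow> \<not> P dvd c"
  using nzr[of c] by simp

lemma E6_wv:
  assumes "[z^2 = FF x y] (mod P)"
  shows "E6 P (wv x y z)"
proof -
  have "(y * (x^2 + 1))^2 - (y * (x^2 - 1))^2 = (2 * x * y)^2" by (simp add: algebra_simps power2_eq_square)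
  then have 1: "[(y * (x^2 + 1))^2 - (y * (x^2 - 1))^2 = (2 * x * y)^2] (mod P)" by simp
  have 2: "[z^2 - (y * (x^2 + 1))^2 = (x * (y^2 - 1))^2] (mod P)"
    by (rule cg_lin1[OF assms, of _ _ 1]) (simp add: FF_def algebra_simps power2_eq_square)
  have 3: "[z^2 - (y * (x^2 - 1))^2 = (x * (y^2 + 1))^2] (mod P)"
    by (rule cg_lin1[OF assms, of _ _ 1]) (simp add: FF_def algebra_simps power2_eq_square)
  show ?thesis unfolding E6_def wv_nth using 1 2 3 by blast
qed

definition Mgen where
  "Mgen = {(x,y,z). x \<in> {0..<P} \<and> y \<in> {0..<P} \<and> z \<in> {0..<P} \<and> x \<noteq> 0 \<and> y \<noteq> 0 \<and>
     [z^2 = FF x y] (mod P)}"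

definition cone_gen where "cone_gen = {v \<in> S_cone p. v!3 \<noteq> 0}"

definition gmap where "gmap = (\<lambda>((x,y,z),c). scl P c (wv x y z))"

lemma gmap_in:
  assumes "t \<in> Mgen \<times> {1..<P}"
  shows "gmap t \<in> cone_gen"
proof -
  obtain xyz c where t0: "t = (xyz, c)" by (cases t)
  obtain x y z where t1: "xyz = (x,y,z)" by (cases xyz)
  have t: "t = ((x,y,z),c)" using t0 t1 by simp
  have m: "(x,y,z) \<in> Mgen" "c \<in> {1..<P}" using assms unfolding t by (simp_all add: mem_Times_iff)
  have h: "x \<in> {0..<P}" "y \<in> {0..<P}" "z \<in> {0..<P}" "x \<noteq> 0" "y \<noteq> 0" "[z^2 = FF x y] (mod P)"
    "c \<in> {1..<P}"
    using m unfolding Mgen_def by simp_all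
  have g: "gmap t = scl P c (wv x y z)" unfolding gmap_def t by simp
  have nc: "\<not> P dvd c" using nzU h(7) by blast
  have nx: "\<not> P dvd x" using nzr h(1,4) by blast
  have ny: "\<not> P dvd y" using nzr h(2,5) by blast
  have n3: "\<not> P dvd (c * (2 * x * y))"
    using ndm[OF nc ndm[OF ndm[OF nd2 nx] ny]] by (simp add: mult.assoc)
  let ?w = "scl P c (wv x y z)"
  have L: "length ?w = 6" by (simp add: wv_nth)
  have R: "\<forall>i<6. ?w ! i \<in> {0..<P}" using gt2 by (simp add: wv_nth)
  have Z: "?w ! 3 \<noteq> 0" using n3 by (simp add: wv_nth dvd_eq_mod_eq_0)
  have Z': "\<exists>i<6. ?w ! i \<noteq> 0" using Z by (intro exI[of _ 3]) simp
  have E: "E6 P ?w"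
    by (rule E6_scale[OF _ E6_wv[OF h(6)], of _ c]) (simp add: wv_nth)
  have "?w \<in> S_cone p" by (subst cone_char) (intro conjI L R Z' E)
  then show ?thesis unfolding cone_gen_def g using Z by simp
qed

lemma gmap_inj: "inj_on gmap (Mgen \<times> {1..<P})"
proof (rule inj_onI)
  fix s t assume s: "s \<in> Mgen \<times> {1..<P}" and t: "t \<in> Mgen \<times> {1..<P}" and e: "gmap s = gmap t"
  obtain xyz c where s0: "s = (xyz, c)" by (cases s)
  obtain x y z where s1: "xyz = (x,y,z)" by (cases xyz)
  have st: "s = ((x,y,z),c)" using s0 s1 by simp
  obtain xyz' c' where t0: "t = (xyz', c')" by (cases t)
  obtain x' y' z' where t1: "xyz' = (x',y',z')" by (cases xyz')
  have tt: "t = ((x',y',z'),c')" using t0 t1 by simp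
  have m: "(x,y,z) \<in> Mgen" "c \<in> {1..<P}" using s unfolding st by (simp_all add: mem_Times_iff)
  have m': "(x',y',z') \<in> Mgen" "c' \<in> {1..<P}" using t unfolding tt by (simp_all add: mem_Times_iff)
  have h: "x \<in> {0..<P}" "y \<in> {0..<P}" "z \<in> {0..<P}" "x \<noteq> 0" "y \<noteq> 0" "c \<in> {1..<P}"
    using m unfolding Mgen_def by simp_all
  have h': "x' \<in> {0..<P}" "y' \<in> {0..<P}" "z' \<in> {0..<P}" "x' \<noteq> 0" "y' \<noteq> 0" "c' \<in> {1..<P}"
    using m' unfolding Mgen_def by simp_all
  have E: "scl P c (wv x y z) = scl P c' (wv x' y' z')" using e unfolding gmap_def st tt by simp
  have A: "[c * (wv x y z ! i) = c' * (wv x' y' z' ! i)] (mod P)" if "i < 6" for i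
  proof -
    have "scl P c (wv x y z) ! i = scl P c' (wv x' y' z') ! i" using E by simp
    then show ?thesis using that by (simp add: wv_nth cong_def)
  qed
  have A0: "[c * z = c' * z'] (mod P)" using A[of 0, unfolded wv_nth] by simp
  have A1: "[c * (y * (x^2 + 1)) = c' * (y' * (x'^2 + 1))] (mod P)" using A[of 1, unfolded wv_nth] by simp
  have A2: "[c * (y * (x^2 - 1)) = c' * (y' * (x'^2 - 1))] (mod P)" using A[of 2, unfolded wv_nth] by simp
  have A3: "[c * (2 * x * y) = c' * (2 * x' * y')] (mod P)" using A[of 3, unfolded wv_nth] by simp
  have A4: "[c * (x * (y^2 - 1)) = c' * (x' * (y'^2 - 1))] (mod P)" using A[of 4, unfolded wv_nth] by simp
  have A5: "[c * (x * (y^2 + 1)) = c' * (x' * (y'^2 + 1))] (mod P)" using A[of 5, unfolded wv_nth] by simp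
  have a: "[c * (2 * y) = c' * (2 * y')] (mod P)"
    by (rule cg_lin2[OF A1 A2, of _ _ 1 "-1"]) (simp add: algebra_simps power2_eq_square)
  have b: "[c * (2 * x) = c' * (2 * x')] (mod P)"
    by (rule cg_lin2[OF A5 A4, of _ _ 1 "-1"]) (simp add: algebra_simps power2_eq_square)
  have nc: "\<not> P dvd c" using nzU h(6) by blast
  have nx: "\<not> P dvd x" using nzr h(1,4) by blast
  have ny: "\<not> P dvd y" using nzr h(2,5) by blast
  have n2y: "\<not> P dvd (c * (2 * y))" using ndm[OF nc ndm[OF nd2 ny]] .
  have n2x: "\<not> P dvd (c * (2 * x))" using ndm[OF nc ndm[OF nd2 nx]] .
  have "[x * (c * (2 * y)) = x' * (c * (2 * y))] (mod P)"
    by (rule cg_lin2[OF A3 a, of _ _ 1 "-x'"]) (simp add: algebra_simps power2_eq_square)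
  then have "[x = x'] (mod P)" using cg_cancel n2y by blast
  then have xx: "x = x'" using rng_eq h(1) h'(1) by (auto simp: cong_iff_dvd_diff)
  have "[y * (c * (2 * x)) = y' * (c * (2 * x))] (mod P)"
    by (rule cg_lin2[OF A3 b, of _ _ 1 "-y'"]) (simp add: algebra_simps power2_eq_square)
  then have "[y = y'] (mod P)" using cg_cancel n2x by blast
  then have yy: "y = y'" using rng_eq h(2) h'(2) by (auto simp: cong_iff_dvd_diff)
  have "[c * (2 * x) = c' * (2 * x)] (mod P)" using b xx by simp
  then have "[c = c'] (mod P)" using cg_cancel ndm[OF nd2 nx] by (simp add: mult.assoc)
  then have cc: "c = c'" using rng_eq h(6) h'(6) by (auto simp: cong_iff_dvd_diff)
  have "[z * c = z' * c] (mod P)" using A0 cc by (simp add: mult.commute)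
  then have "[z = z'] (mod P)" using cg_cancel nc by blast
  then have zz: "z = z'" using rng_eq h(3) h'(3) by (auto simp: cong_iff_dvd_diff)
  show "s = t" unfolding st tt using xx yy zz cc by simp
qed


lemma gmap_surj:
  assumes v: "v \<in> cone_gen"
  shows "v \<in> gmap ` (Mgen \<times> {1..<P})"
proof -
  have vc: "v \<in> S_cone p" and v3: "v!3 \<noteq> 0" using v unfolding cone_gen_def by auto
  have l: "length v = 6" and r: "\<forall>i<6. v!i \<in> {0..<P}" and e: "E6 P v"
    using vc cone_char by auto
  define a0 where "a0 = v!0"
  define a1 where "a1 = v!1"
  define a2 where "a2 = v!2"
  define a3 where "a3 = v!3"
  define a4 where "a4 = v!4"
  define a5 where "a5 = v!5"
  have Q1: "[a1^2 - a2^2 = a3^2] (mod P)" and Q2: "[a0^2 - a1^2 = a4^2] (mod P)"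
    and Q3: "[a0^2 - a2^2 = a5^2] (mod P)"
    using e unfolding E6_def a0_def a1_def a2_def a3_def a4_def a5_def by auto
  have Q4: "[a5^2 - a4^2 = a3^2] (mod P)"
    by (rule cg_lin3[OF Q1 Q2 Q3, of _ _ 1 1 "-1"]) (simp add: algebra_simps)
  have n3: "\<not> P dvd a3" using nzr r v3 unfolding a3_def by auto
  define D where "D = a1 - a2"
  define E where "E = a5 - a4"
  have nD: "\<not> P dvd D"
  proof
    assume "P dvd D"
    then have D0: "[D = 0] (mod P)" by (simp add: cong_0_iff)
    have "[a3^2 = 0] (mod P)"
      by (rule cg_lin2[OF Q1 D0, of _ _ "-1" "a1 + a2"]) (simp add: D_def algebra_simps power2_eq_square)
    then have "P dvd a3^2" by (simp add: cong_0_iff)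
    then have "P dvd a3" by (rule dvd_pow_P[OF Pp Po])
    then show False using n3 by simp
  qed
  have nE: "\<not> P dvd E"
  proof
    assume "P dvd E"
    then have E0: "[E = 0] (mod P)" by (simp add: cong_0_iff)
    have "[a3^2 = 0] (mod P)"
      by (rule cg_lin2[OF Q4 E0, of _ _ "-1" "a5 + a4"]) (simp add: E_def algebra_simps power2_eq_square)
    then have "P dvd a3^2" by (simp add: cong_0_iff)
    then have "P dvd a3" by (rule dvd_pow_P[OF Pp Po])
    then show False using n3 by simp
  qed
  obtain ia where ia: "P dvd (D * ia - 1)" using invex nD by blast
  obtain ib where ib: "P dvd (E * ib - 1)" using invex nE by blast
  obtain ih where ih: "P dvd (2 * ih - 1)" using invex nd2 by blast
  obtain ie where ie: "P dvd (a3 * ie - 1)" using invex n3 by blast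
  have H1: "[D * ia = 1] (mod P)" using ia by (simp add: cong_iff_dvd_diff)
  have H2: "[E * ib = 1] (mod P)" using ib by (simp add: cong_iff_dvd_diff)
  have H3: "[2 * ih = 1] (mod P)" using ih by (simp add: cong_iff_dvd_diff)
  have H4: "[a3 * ie = 1] (mod P)" using ie by (simp add: cong_iff_dvd_diff)
  define x0 where "x0 = a3 * ia"
  define y0 where "y0 = a3 * ib"
  define c0 where "c0 = D * E * ih * ie"
  define z0 where "z0 = 2 * a0 * a3 * ia * ib"
  define x where "x = x0 mod P"
  define y where "y = y0 mod P"
  define c where "c = c0 mod P"
  define z where "z = z0 mod P"
  have xx: "[x = x0] (mod P)" "[y = y0] (mod P)" "[c = c0] (mod P)" "[z = z0] (mod P)"
    unfolding x_def y_def c_def z_def by simp_all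
  have i: "[x * D = a3] (mod P)"
    by (rule cg_lin2[OF xx(1) H1, of _ _ D a3]) (simp add: x0_def algebra_simps)
  have ii: "[y * E = a3] (mod P)"
    by (rule cg_lin2[OF xx(2) H2, of _ _ E a3]) (simp add: y0_def algebra_simps)
  have iii0: "[2 * c0 * y0 = D] (mod P)"
    by (rule cg_lin3[OF H3 H2 H4, of _ _ "D * (E * ib) * (a3 * ie)" "D * (a3 * ie)" D])
      (simp add: c0_def y0_def algebra_simps)
  have iii: "[2 * c * y = D] (mod P)"
    by (rule cg_lin3[OF xx(3) xx(2) iii0, of _ _ "2 * y" "2 * c0" 1]) (simp add: algebra_simps)
  have iv0: "[2 * c0 * x0 = E] (mod P)"
    by (rule cg_lin3[OF H3 H1 H4, of _ _ "E * (D * ia) * (a3 * ie)" "E * (a3 * ie)" E])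
      (simp add: c0_def x0_def algebra_simps)
  have iv: "[2 * c * x = E] (mod P)"
    by (rule cg_lin3[OF xx(3) xx(1) iv0, of _ _ "2 * x" "2 * c0" 1]) (simp add: algebra_simps)
  have v0: "[c0 * z0 = a0] (mod P)"
    by (rule cg_lin4[OF H1 H2 H3 H4, of _ _ "a0 * (E * ib) * (2 * ih) * (a3 * ie)"
          "a0 * (2 * ih) * (a3 * ie)" "a0 * (a3 * ie)" a0])
      (simp add: c0_def z0_def algebra_simps)
  have vv: "[c * z = a0] (mod P)"
    by (rule cg_lin3[OF xx(3) xx(4) v0, of _ _ z c0 1]) (simp add: algebra_simps)
  have vi: "[D * x^2 = a1 + a2] (mod P)"
  proof -
    have "[(D * x^2) * D = (a1 + a2) * D] (mod P)"
      by (rule cg_lin2[OF i Q1, of _ _ "x * D + a3" "-1"]) (simp add: D_def algebra_simps power2_eq_square)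
    then show ?thesis using cg_cancel nD by blast
  qed
  have vii: "[E * y^2 = a5 + a4] (mod P)"
  proof -
    have "[(E * y^2) * E = (a5 + a4) * E] (mod P)"
      by (rule cg_lin2[OF ii Q4, of _ _ "y * E + a3" "-1"]) (simp add: E_def algebra_simps power2_eq_square)
    then show ?thesis using cg_cancel nE by blast
  qed
  have w1: "[c * (y * (x^2 + 1)) = a1] (mod P)"
  proof -
    have "[c * (y * (x^2 + 1)) * 2 = a1 * 2] (mod P)"
      by (rule cg_lin2[OF iii vi, of _ _ "x^2 + 1" 1]) (simp add: D_def algebra_simps)
    then show ?thesis using cg_cancel nd2 by blast
  qed
  have w2: "[c * (y * (x^2 - 1)) = a2] (mod P)"
  proof -
    have "[c * (y * (x^2 - 1)) * 2 = a2 * 2] (mod P)"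
      by (rule cg_lin2[OF iii vi, of _ _ "x^2 - 1" 1]) (simp add: D_def algebra_simps)
    then show ?thesis using cg_cancel nd2 by blast
  qed
  have w3: "[c * (2 * x * y) = a3] (mod P)"
    by (rule cg_lin2[OF iii i, of _ _ x 1]) (simp add: algebra_simps)
  have w4: "[c * (x * (y^2 - 1)) = a4] (mod P)"
  proof -
    have "[c * (x * (y^2 - 1)) * 2 = a4 * 2] (mod P)"
      by (rule cg_lin2[OF iv vii, of _ _ "y^2 - 1" 1]) (simp add: E_def algebra_simps)
    then show ?thesis using cg_cancel nd2 by blast
  qed
  have w5: "[c * (x * (y^2 + 1)) = a5] (mod P)"
  proof -
    have "[c * (x * (y^2 + 1)) * 2 = a5 * 2] (mod P)"
      by (rule cg_lin2[OF iv vii, of _ _ "y^2 + 1" 1]) (simp add: E_def algebra_simps)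
    then show ?thesis using cg_cancel nd2 by blast
  qed
  have nc: "\<not> P dvd c"
  proof
    assume "P dvd c"
    then have Z: "[c = 0] (mod P)" by (simp add: cong_0_iff)
    have "[D = 0] (mod P)"
      by (rule cg_lin2[OF Z iii, of _ _ "2 * y" "-1"]) (simp add: algebra_simps)
    then show False using nD by (simp add: cong_0_iff)
  qed
  have nx: "\<not> P dvd x"
  proof
    assume "P dvd x"
    then have Z: "[x = 0] (mod P)" by (simp add: cong_0_iff)
    have "[a3 = 0] (mod P)"
      by (rule cg_lin2[OF Z i, of _ _ D "-1"]) (simp add: algebra_simps)
    then show False using n3 by (simp add: cong_0_iff)
  qed
  have ny: "\<not> P dvd y"
  proof
    assume "P dvd y"
    then have Z: "[y = 0] (mod P)" by (simp add: cong_0_iff)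
    have "[a3 = 0] (mod P)"
      by (rule cg_lin2[OF Z ii, of _ _ E "-1"]) (simp add: algebra_simps)
    then show False using n3 by (simp add: cong_0_iff)
  qed
  have zF: "[z^2 = FF x y] (mod P)"
  proof -
    have "[z^2 * c^2 = FF x y * c^2] (mod P)"
      by (rule cg_lin4[OF vv Q3 w2 w5, of _ _ "c * z + a0" 1 "- (c * (y * (x^2 - 1)) + a2)"
            "- (c * (x * (y^2 + 1)) + a5)"]) (simp add: FF_def algebra_simps power2_eq_square)
    moreover have "\<not> P dvd c^2" using nc ndm by (simp add: power2_eq_square)
    ultimately show ?thesis using cg_cancel by blast
  qed
  have xr: "x \<in> {0..<P}" "y \<in> {0..<P}" "z \<in> {0..<P}" "c \<in> {0..<P}"
    unfolding x_def y_def z_def c_def using gt2 by simp_all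
  have x0n: "x \<noteq> 0" "y \<noteq> 0" "c \<noteq> 0" using nx ny nc by auto
  have mem: "((x,y,z),c) \<in> Mgen \<times> {1..<P}"
    unfolding Mgen_def using xr x0n zF by simp
  have "gmap ((x,y,z),c) = v"
  proof -
    have "scl P c (wv x y z) = v"
    proof (rule nth_equalityI)
      show "length (scl P c (wv x y z)) = length v" using l by (simp add: wv_nth)
      fix i assume "i < length (scl P c (wv x y z))"
      then have i6: "i < 6" by (simp add: wv_nth)
      have C: "[c * (wv x y z ! i) = v ! i] (mod P)"
      proof -
        have "i = 0 \<or> i = 1 \<or> i = 2 \<or> i = 3 \<or> i = 4 \<or> i = 5" using i6 by auto
        then show ?thesis
          using vv w1 w2 w3 w4 w5 unfolding a0_def a1_def a2_def a3_def a4_def a5_def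
          by (elim disjE) (simp_all add: wv_def)
      qed
      have "(c * (wv x y z ! i)) mod P = v ! i" using mer[OF _ C] r i6 by blast
      then show "scl P c (wv x y z) ! i = v ! i" using i6 by (simp add: wv_nth)
    qed
    then show ?thesis unfolding gmap_def by simp
  qed
  then show ?thesis using mem by blast
qed

lemma gmap_img: "gmap ` (Mgen \<times> {1..<P}) = cone_gen"
  using gmap_in gmap_surj by blast

lemma card_cone_gen: "card cone_gen = card Mgen * (p - 1)"
proof -
  have "card cone_gen = card (Mgen \<times> {1..<P})"
    using card_image[OF gmap_inj] gmap_img by simp
  also have "\<dots> = card Mgen * card {1..<P}" by (rule card_cartesian_product)
  also have "card {1..<P} = p - 1" using PP by simp
  finally show ?thesis .
qed

lemmas hypc = hyp_count[OF Pp Po]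
lemmas sqc = sq_count[OF Pp Po]

lemma sq0_iff: "a \<in> {0..<P} \<Longrightarrow> [a^2 = 0] (mod P) \<longleftrightarrow> a = 0"
proof
  assume a: "a \<in> {0..<P}" and "[a^2 = 0] (mod P)"
  then have "P dvd a^2" by (simp add: cong_0_iff)
  then have "P dvd a" by (rule dvd_pow_P[OF Pp Po])
  then show "a = 0" using a range_0[OF Pp Po] by auto
qed simp

lemma fib_sq: "b \<in> {0..<P} \<Longrightarrow> card {e \<in> {0..<P}. [e^2 = b^2] (mod P)} = (if b = 0 then 1 else 2)"
proof -
  assume b: "b \<in> {0..<P}"
  have "QuadRes P (b^2)" unfolding QuadRes_def by (rule exI[of _ b]) simp
  then show ?thesis using sqc[of "b^2"] sq0_iff[OF b] by simp
qed

definition Qs where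
  "Qs = {(c,a,b). c \<in> {0..<P} \<and> a \<in> {0..<P} \<and> b \<in> {0..<P} \<and> [a^2 - b^2 = c^2] (mod P)}"

lemma finite_Qs: "finite Qs"
proof -
  have "Qs \<subseteq> {0..<P} \<times> {0..<P} \<times> {0..<P}" unfolding Qs_def by auto
  then show ?thesis by (rule finite_subset) simp
qed

lemma card_Qs: "int (card Qs) = P^2"
proof -
  have "Qs = Sigma {0..<P} (\<lambda>c. {(a,b). a \<in> {0..<P} \<and> b \<in> {0..<P} \<and> [a^2 - b^2 = c^2] (mod P)})"
    unfolding Qs_def by auto
  moreover have fin: "finite {(a,b). a \<in> {0..<P} \<and> b \<in> {0..<P} \<and> [a^2 - b^2 = c^2] (mod P)}" for c
    by (rule finite_subset[of _ "{0..<P} \<times> {0..<P}"]) auto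
  ultimately have "card Qs = (\<Sum>c\<in>{0..<P}. card {(a,b). a \<in> {0..<P} \<and> b \<in> {0..<P} \<and> [a^2 - b^2 = c^2] (mod P)})"
    using card_SigmaI[of "{0..<P}" "\<lambda>c. {(a,b). a \<in> {0..<P} \<and> b \<in> {0..<P} \<and> [a^2 - b^2 = c^2] (mod P)}"] fin
    by simp
  then have "int (card Qs) = (\<Sum>c\<in>{0..<P}. int (card {(a,b). a \<in> {0..<P} \<and> b \<in> {0..<P} \<and> [a^2 - b^2 = c^2] (mod P)}))"
    by simp
  also have "\<dots> = (\<Sum>c\<in>{0..<P}. (if c = 0 then 2 * P - 1 else P - 1))"
  proof (rule sum.cong[OF refl])
    fix c assume c: "c \<in> {0..<P}"
    show "int (card {(a,b). a \<in> {0..<P} \<and> b \<in> {0..<P} \<and> [a^2 - b^2 = c^2] (mod P)}) = (if c = 0 then 2 * P - 1 else P - 1)"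
      using hypc[of "c^2"] sq0_iff[OF c] by simp
  qed
  also have "\<dots> = (2 * P - 1) + (\<Sum>c\<in>{0..<P} - {0}. P - 1)"
  proof -
    have z: "0 \<in> {0..<P}" using gt2 by simp
    show ?thesis using sum.remove[OF _ z, of "\<lambda>c. (if c = 0 then 2 * P - 1 else P - 1)"] by simp
  qed
  also have "\<dots> = P^2"
  proof -
    have "card ({0..<P} - {0}) = nat (P - 1)" using gt2 by (simp add: card_Diff_singleton)
    then show ?thesis using gt2 by (simp add: power2_eq_square algebra_simps)
  qed
  finally show ?thesis .
qed

lemma card_Qs_b0: "card {q \<in> Qs. snd (snd q) = 0} = nat (2 * P - 1)"
proof -
  have "{q \<in> Qs. snd (snd q) = 0} = (\<lambda>(a,c). (c,a,0)) ` {(a,c). a \<in> {0..<P} \<and> c \<in> {0..<P} \<and> [a^2 - c^2 = 0] (mod P)}"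
  proof -
    have "[a^2 - 0^2 = c^2] (mod P) \<longleftrightarrow> [a^2 - c^2 = 0] (mod P)" for a c :: int
      by (simp add: cong_iff_dvd_diff)
    then show ?thesis unfolding Qs_def using gt2 by (auto simp: image_iff)
  qed
  moreover have "inj_on (\<lambda>(a,c). (c,a,0::int)) X" for X :: "(int \<times> int) set"
    by (auto simp: inj_on_def)
  ultimately have "card {q \<in> Qs. snd (snd q) = 0} = card {(a,c). a \<in> {0..<P} \<and> c \<in> {0..<P} \<and> [a^2 - c^2 = 0] (mod P)}"
    by (simp add: card_image)
  then show ?thesis using hypc[of 0] by simp
qed

lemma card_Qs_c0: "card {q \<in> Qs. fst q = 0} = nat (2 * P - 1)"
proof -
  have "{q \<in> Qs. fst q = 0} = (\<lambda>(a,b). (0,a,b)) ` {(a,b). a \<in> {0..<P} \<and> b \<in> {0..<P} \<and> [a^2 - b^2 = 0] (mod P)}"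
    unfolding Qs_def using gt2 by (auto simp: image_iff)
  moreover have "inj_on (\<lambda>(a,b). (0::int,a,b)) X" for X :: "(int \<times> int) set"
    by (auto simp: inj_on_def)
  ultimately have "card {q \<in> Qs. fst q = 0} = card {(a,b). a \<in> {0..<P} \<and> b \<in> {0..<P} \<and> [a^2 - b^2 = 0] (mod P)}"
    by (simp add: card_image)
  then show ?thesis using hypc[of 0] by simp
qed

lemma card_Qs_00: "card {q \<in> Qs. snd (snd q) = 0 \<and> fst q = 0} = 1"
proof -
  have "{q \<in> Qs. snd (snd q) = 0 \<and> fst q = 0} = {(0,0,0)}"
  proof -
    have "a \<in> {0..<P} \<Longrightarrow> [a^2 - 0^2 = 0^2] (mod P) \<longleftrightarrow> a = 0" for a :: int
      using sq0_iff[of a] by simp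
    then show ?thesis unfolding Qs_def using gt2 by auto
  qed
  then show ?thesis by simp
qed

definition cone_exc where "cone_exc = {v \<in> S_cone p. v!3 = 0}"

lemma list6: "length v = 6 \<Longrightarrow> v = [v!0, v!1, v!2, v!3, v!4, v!5]"
proof (rule nth_equalityI)
  fix i assume l: "length v = 6" and "i < length v"
  then have "i = 0 \<or> i = 1 \<or> i = 2 \<or> i = 3 \<or> i = 4 \<or> i = 5" by auto
  then show "v ! i = [v!0, v!1, v!2, v!3, v!4, v!5] ! i" by (elim disjE) simp_all
qed simp

lemma E0_char: "v \<in> insert (replicate 6 0) cone_exc \<longleftrightarrow>
   length v = 6 \<and> (\<forall>i<6. v!i \<in> {0..<P}) \<and> v!3 = 0 \<and> E6 P v"
proof
  assume "v \<in> insert (replicate 6 0) cone_exc"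
  then consider "v = replicate 6 0" | "v \<in> cone_exc" by blast
  then show "length v = 6 \<and> (\<forall>i<6. v!i \<in> {0..<P}) \<and> v!3 = 0 \<and> E6 P v"
  proof cases
    case 1
    then show ?thesis using gt2 by (simp add: E6_def)
  next
    case 2
    then show ?thesis unfolding cone_exc_def using cone_char by auto
  qed
next
  assume h: "length v = 6 \<and> (\<forall>i<6. v!i \<in> {0..<P}) \<and> v!3 = 0 \<and> E6 P v"
  show "v \<in> insert (replicate 6 0) cone_exc"
  proof (cases "\<exists>i<6. v!i \<noteq> 0")
    case True
    then have "v \<in> S_cone p" using h by (subst cone_char) blast
    then show ?thesis using h unfolding cone_exc_def by blast
  next
    case False
    then have "v = replicate 6 0" using h by (intro nth_equalityI) auto
    then show ?thesis by blast
  qed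
qed

definition Ts where
  "Ts = Sigma Qs (\<lambda>(c,a,b). {e \<in> {0..<P}. [e^2 = b^2] (mod P)} \<times> {e \<in> {0..<P}. [e^2 = c^2] (mod P)})"

definition hmap where "hmap = (\<lambda>((c,a,b),(e1,e2)). [a, b, e1, 0, c, e2])"

lemma hmap_inj: "inj_on hmap Ts"
  unfolding hmap_def by (rule inj_onI) auto

lemma hmap_img: "hmap ` Ts = insert (replicate 6 0) cone_exc"
proof
  show "hmap ` Ts \<subseteq> insert (replicate 6 0) cone_exc"
  proof
    fix v assume "v \<in> hmap ` Ts"
    then obtain c a b e1 e2 where t: "((c,a,b),(e1,e2)) \<in> Ts" "v = [a, b, e1, 0, c, e2]"
      unfolding hmap_def by auto
    have h: "c \<in> {0..<P}" "a \<in> {0..<P}" "b \<in> {0..<P}" "[a^2 - b^2 = c^2] (mod P)"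
      "e1 \<in> {0..<P}" "[e1^2 = b^2] (mod P)" "e2 \<in> {0..<P}" "[e2^2 = c^2] (mod P)"
      using t(1) unfolding Ts_def Qs_def by auto
    have 1: "[b^2 - e1^2 = 0^2] (mod P)" by (rule cg_lin1[OF h(6), of _ _ "-1"]) simp
    have 3: "[a^2 - e1^2 = e2^2] (mod P)" by (rule cg_lin3[OF h(4) h(6) h(8), of _ _ 1 "-1" "-1"]) simp
    have "E6 P v" unfolding E6_def t(2) using 1 h(4) 3 by simp
    moreover have "\<forall>i<6. v!i \<in> {0..<P}" unfolding t(2) using h gt2
      by (auto simp: less_Suc_eq nth_Cons')
    ultimately show "v \<in> insert (replicate 6 0) cone_exc" unfolding E0_char t(2) by simp
  qed
next
  show "insert (replicate 6 0) cone_exc \<subseteq> hmap ` Ts"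
  proof
    fix v assume "v \<in> insert (replicate 6 0) cone_exc"
    then have h: "length v = 6" "\<forall>i<6. v!i \<in> {0..<P}" "v!3 = 0" "E6 P v" unfolding E0_char by auto
    have r: "v!0 \<in> {0..<P}" "v!1 \<in> {0..<P}" "v!2 \<in> {0..<P}" "v!4 \<in> {0..<P}" "v!5 \<in> {0..<P}"
      using h(2) by auto
    have Q: "[v!1^2 - v!2^2 = v!3^2] (mod P)" "[v!0^2 - v!1^2 = v!4^2] (mod P)" "[v!0^2 - v!2^2 = v!5^2] (mod P)"
      using h(4) unfolding E6_def by auto
    have e1: "[v!2^2 = v!1^2] (mod P)" by (rule cg_lin1[OF Q(1), of _ _ "-1"]) (simp add: h(3))
    have e2: "[v!5^2 = v!4^2] (mod P)" by (rule cg_lin3[OF Q(3) Q(2) e1, of _ _ "-1" 1 "-1"]) simp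
    have "((v!4, v!0, v!1), (v!2, v!5)) \<in> Ts" unfolding Ts_def Qs_def using r Q(2) e1 e2 by simp
    moreover have "hmap ((v!4, v!0, v!1), (v!2, v!5)) = v"
      unfolding hmap_def using list6[OF h(1)] h(3) by simp
    ultimately show "v \<in> hmap ` Ts" by force
  qed
qed

lemma card_Ts: "int (card Ts) = 4 * P^2 - 8 * P + 5"
proof -
  have fin: "\<forall>q\<in>Qs. finite ((\<lambda>(c,a,b). {e \<in> {0..<P}. [e^2 = b^2] (mod P)} \<times> {e \<in> {0..<P}. [e^2 = c^2] (mod P)}) q)"
  proof
    fix q assume "q \<in> Qs"
    obtain c a b where qq: "q = (c,a,b)" by (cases q) auto
    show "finite ((\<lambda>(c,a,b). {e \<in> {0..<P}. [e^2 = b^2] (mod P)} \<times> {e \<in> {0..<P}. [e^2 = c^2] (mod P)}) q)"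
      unfolding qq split
      by (intro finite_cartesian_product; rule finite_subset[of _ "{0..<P}"]) auto
  qed
  have "card Ts = (\<Sum>q\<in>Qs. card ((\<lambda>(c,a,b). {e \<in> {0..<P}. [e^2 = b^2] (mod P)} \<times> {e \<in> {0..<P}. [e^2 = c^2] (mod P)}) q))"
    unfolding Ts_def using card_SigmaI[OF finite_Qs fin] .
  then have "int (card Ts) = (\<Sum>q\<in>Qs. int (card ((\<lambda>(c,a,b). {e \<in> {0..<P}. [e^2 = b^2] (mod P)} \<times> {e \<in> {0..<P}. [e^2 = c^2] (mod P)}) q)))"
    by simp
  also have "\<dots> = (\<Sum>q\<in>Qs. 4 - 2 * of_bool (snd (snd q) = 0) - 2 * of_bool (fst q = 0) + of_bool (snd (snd q) = 0 \<and> fst q = 0))"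
  proof (rule sum.cong[OF refl])
    fix q assume q: "q \<in> Qs"
    obtain c a b where qq: "q = (c,a,b)" by (cases q) auto
    have r: "c \<in> {0..<P}" "b \<in> {0..<P}" using q qq unfolding Qs_def by auto
    show "int (card ((\<lambda>(c,a,b). {e \<in> {0..<P}. [e^2 = b^2] (mod P)} \<times> {e \<in> {0..<P}. [e^2 = c^2] (mod P)}) q)) =
      4 - 2 * of_bool (snd (snd q) = 0) - 2 * of_bool (fst q = 0) + of_bool (snd (snd q) = 0 \<and> fst q = 0)"
      unfolding qq using fib_sq[OF r(1)] fib_sq[OF r(2)] by (simp add: card_cartesian_product)
  qed
  also have "\<dots> = 4 * int (card Qs) - 2 * int (card {q \<in> Qs. snd (snd q) = 0}) - 2 * int (card {q \<in> Qs. fst q = 0})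
      + int (card {q \<in> Qs. snd (snd q) = 0 \<and> fst q = 0})"
  proof -
    have e: "Qs \<inter> {q. R q} = {q \<in> Qs. R q}" for R by blast
    show ?thesis using finite_Qs by (simp add: sum.distrib sum_subtractf sum_distrib_left[symmetric] e)
  qed
  also have "\<dots> = 4 * P^2 - 8 * P + 5"
    using card_Qs card_Qs_b0 card_Qs_c0 card_Qs_00 gt2 by simp
  finally show ?thesis .
qed

lemma card_cone_exc: "int (card cone_exc) = 4 * (P - 1)^2"
proof -
  have "card (insert (replicate 6 0) cone_exc) = card Ts"
    using card_image[OF hmap_inj] hmap_img by simp
  moreover have "replicate 6 0 \<notin> cone_exc" unfolding cone_exc_def S_cone_def by simp
  moreover have "finite cone_exc" unfolding cone_exc_def using finite_cone by simp
  ultimately have "card cone_exc + 1 = card Ts" by simp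
  then have "int (card cone_exc) = int (card Ts) - 1" by simp
  then show ?thesis using card_Ts by (simp add: power2_eq_square algebra_simps)
qed

definition Mset where
  "Mset = {(x,y,z). x \<in> {0..<P} \<and> y \<in> {0..<P} \<and> z \<in> {0..<P} \<and> [z^2 = FF x y] (mod P)}"

lemma M_Mset: "M p = card Mset"
  unfolding M_def Mset_def FF_def PP[symmetric] by simp

lemma finite_Mset: "finite Mset"
proof -
  have "Mset \<subseteq> {0..<P} \<times> {0..<P} \<times> {0..<P}" unfolding Mset_def by auto
  then show ?thesis by (rule finite_subset) simp
qed

lemma card_X0: "card {t \<in> Mset. fst t = 0} = nat (2 * P - 1)"
proof -
  have e: "[a^2 = b^2] (mod P) \<longleftrightarrow> [a^2 - b^2 = 0] (mod P)" for a b :: int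
    by (simp add: cong_iff_dvd_diff)
  have "{t \<in> Mset. fst t = 0} = (\<lambda>(z,y). (0,y,z)) ` {(z,y). z \<in> {0..<P} \<and> y \<in> {0..<P} \<and> [z^2 - y^2 = 0] (mod P)}"
    unfolding Mset_def FF_def using gt2 by (auto simp: image_iff e)
  moreover have "inj_on (\<lambda>(z,y). (0::int,y,z)) X" for X :: "(int \<times> int) set"
    by (auto simp: inj_on_def)
  ultimately have "card {t \<in> Mset. fst t = 0} = card {(z,y). z \<in> {0..<P} \<and> y \<in> {0..<P} \<and> [z^2 - y^2 = 0] (mod P)}"
    by (simp add: card_image)
  then show ?thesis using hypc[of 0] by simp
qed

lemma card_Y0: "card {t \<in> Mset. fst (snd t) = 0} = nat (2 * P - 1)"
proof -
  have e: "[a^2 = b^2] (mod P) \<longleftrightarrow> [a^2 - b^2 = 0] (mod P)" for a b :: int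
    by (simp add: cong_iff_dvd_diff)
  have "{t \<in> Mset. fst (snd t) = 0} = (\<lambda>(z,x). (x,0,z)) ` {(z,x). z \<in> {0..<P} \<and> x \<in> {0..<P} \<and> [z^2 - x^2 = 0] (mod P)}"
    unfolding Mset_def FF_def using gt2 by (auto simp: image_iff e)
  moreover have "inj_on (\<lambda>(z,x). (x,0::int,z)) X" for X :: "(int \<times> int) set"
    by (auto simp: inj_on_def)
  ultimately have "card {t \<in> Mset. fst (snd t) = 0} = card {(z,x). z \<in> {0..<P} \<and> x \<in> {0..<P} \<and> [z^2 - x^2 = 0] (mod P)}"
    by (simp add: card_image)
  then show ?thesis using hypc[of 0] by simp
qed

lemma card_XY0: "card ({t \<in> Mset. fst t = 0} \<inter> {t \<in> Mset. fst (snd t) = 0}) = 1"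
proof -
  have "{t \<in> Mset. fst t = 0} \<inter> {t \<in> Mset. fst (snd t) = 0} = {(0,0,0)}"
  proof -
    have "z \<in> {0..<P} \<Longrightarrow> [z^2 = FF 0 0] (mod P) \<longleftrightarrow> z = 0" for z
      using sq0_iff[of z] by (simp add: FF_def)
    then show ?thesis unfolding Mset_def using gt2 by (auto simp: FF_def)
  qed
  then show ?thesis by simp
qed

lemma card_Mset: "int (card Mset) = int (card Mgen) + 4 * P - 3"
proof -
  have U: "Mset = Mgen \<union> ({t \<in> Mset. fst t = 0} \<union> {t \<in> Mset. fst (snd t) = 0})"
    unfolding Mset_def Mgen_def by auto
  have D: "Mgen \<inter> ({t \<in> Mset. fst t = 0} \<union> {t \<in> Mset. fst (snd t) = 0}) = {}"
    unfolding Mset_def Mgen_def by auto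
  have fin: "finite Mgen" "finite {t \<in> Mset. fst t = 0}" "finite {t \<in> Mset. fst (snd t) = 0}"
  proof -
    have "Mgen \<subseteq> Mset" unfolding Mset_def Mgen_def by auto
    then show "finite Mgen" using finite_Mset finite_subset by blast
  qed (use finite_Mset in simp_all)
  have "card Mset = card Mgen + card ({t \<in> Mset. fst t = 0} \<union> {t \<in> Mset. fst (snd t) = 0})"
  proof -
    have "finite ({t \<in> Mset. fst t = 0} \<union> {t \<in> Mset. fst (snd t) = 0})" using fin(2,3) by (rule finite_UnI)
    then have "card (Mgen \<union> ({t \<in> Mset. fst t = 0} \<union> {t \<in> Mset. fst (snd t) = 0})) =
      card Mgen + card ({t \<in> Mset. fst t = 0} \<union> {t \<in> Mset. fst (snd t) = 0})"
      by (rule card_Un_disjoint[OF fin(1) _ D])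
    then show ?thesis using U by simp
  qed
  moreover have "card ({t \<in> Mset. fst t = 0} \<union> {t \<in> Mset. fst (snd t) = 0}) + 1 = nat (2 * P - 1) + nat (2 * P - 1)"
    using card_Un_Int[OF fin(2) fin(3)] card_X0 card_Y0 card_XY0 by simp
  ultimately show ?thesis using gt2 by simp
qed

lemma card_cone: "card (S_cone p) = card cone_gen + card cone_exc"
proof -
  have U: "S_cone p = cone_gen \<union> cone_exc" unfolding cone_gen_def cone_exc_def by blast
  have D: "cone_gen \<inter> cone_exc = {}" unfolding cone_gen_def cone_exc_def by blast
  have f1: "finite cone_gen" unfolding cone_gen_def by (rule finite_subset[OF _ finite_cone]) blast
  have f2: "finite cone_exc" unfolding cone_exc_def by (rule finite_subset[OF _ finite_cone]) blast
  have "card (cone_gen \<union> cone_exc) = card cone_gen + card cone_exc" by (rule card_Un_disjoint[OF f1 f2 D])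
  then show ?thesis using U by simp
qed

lemma S_M: "int (card (S_points p)) + 1 = int (M p)"
proof -
  have p1: "int (p - 1) = P - 1" using gt2 PP by simp
  have "int (p - 1) * int (card (S_points p)) = int (card (S_cone p))"
    using partB by (metis of_nat_mult)
  also have "\<dots> = int (card Mgen) * int (p - 1) + 4 * (P - 1)^2"
    using card_cone card_cone_gen card_cone_exc by simp
  finally have "(P - 1) * int (card (S_points p)) = (P - 1) * (int (card Mgen) + 4 * (P - 1))"
    unfolding p1 by (simp add: algebra_simps power2_eq_square)
  then have "int (card (S_points p)) = int (card Mgen) + 4 * (P - 1)"
    using gt2 by simp
  then show ?thesis using card_Mset M_Mset by simp
qed
end

theorem lemma4p6:
  fixes p k :: nat
  assumes "prime p" and "p = 4 * k + 1"
  shows "int (card (S_points p)) = (int p + 1)^2 + (J p k)^2 \<longleftrightarrow>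
           (int (M p) = (int p + 1)^2 + (int (N p) - int p)^2 + 1 \<and>
            (int p + 1)^2 + (int (N p) - int p)^2 + 1 = (int p + 1)^2 + (J p k)^2 + 1)"
proof -
  have od: "odd p" using assms(2) by simp
  have SM: "int (card (S_points p)) + 1 = int (M p)" using S_M[OF assms(1) od refl] .
  have JN: "J p k = int (N p) - int p" using J_eq[OF assms] .
  show ?thesis using SM JN by auto
qed

end
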